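(* For all positive integers $k$ and $n$ with $n\ge 2$, the cycle $C_{2n}$ is a strict prime $k$th-power distance graph. Furthermore, the labels in a strict prime $k$th-power distance labeling of $C_{2n}$ may be chosen arbitrarily large: for every integer $M$ there is such a labeling all of whose labels exceed $M$.
   Context: A strict prime $k$th-power distance labeling of a graph $G$ is an injective map $L:V(G)\to\mathbb{Z}$ such that for every edge $uv$ of $G$, $|L(u)-L(v)|=p^k$ for some prime $p$ (the prime may depend on the edge); $G$ is a strict prime $k$th-power distance graph if it has such a labeling. *)

theory Defs
  imports "HOL-Computational_Algebra.Primes"
begin

text \<open>A simple graph given by a vertex set V and a symmetric edge relation E.
  The cycle C_m (m \<ge> 3) has vertices 0,...,m-1 and edges {i, (i+1) mod m}.\<close>

definition cycle_edge :: "nat \<Rightarrow> nat \<Rightarrow> nat \<Rightarrow> bool" where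
  "cycle_edge m u v \<longleftrightarrow> u < m \<and> v < m \<and> (v = (u + 1) mod m \<or> u = (v + 1) mod m)"

definition strict_prime_power_distance_labeling ::
  "nat \<Rightarrow> 'a set \<Rightarrow> ('a \<Rightarrow> 'a \<Rightarrow> bool) \<Rightarrow> ('a \<Rightarrow> int) \<Rightarrow> bool" where
  "strict_prime_power_distance_labeling k V E L \<longleftrightarrow>
     inj_on L V \<and>
     (\<forall>u\<in>V. \<forall>v\<in>V. E u v \<longrightarrow> (\<exists>p::nat. prime p \<and> \<bar>L u - L v\<bar> = int p ^ k))"

definition strict_prime_power_distance_graph ::
  "nat \<Rightarrow> 'a set \<Rightarrow> ('a \<Rightarrow> 'a \<Rightarrow> bool) \<Rightarrow> bool" where
  "strict_prime_power_distance_graph k V E \<longleftrightarrow>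
     (\<exists>L. strict_prime_power_distance_labeling k V E L)"

end

theory Submission
  imports Defs
begin

definition lab :: "int \<Rightarrow> nat \<Rightarrow> nat \<Rightarrow> nat \<Rightarrow> int" where
  "lab M k n v = M + 1 + (if v < n then int v * 2^k else 3^k + int (2*n - 1 - v) * 2^k)"

lemma lab_edge_step:
  assumes "k \<ge> 1" "n \<ge> 2" "u < 2*n"
  shows "\<bar>lab M k n u - lab M k n ((u+1) mod (2*n))\<bar> = int 2 ^ k
       \<or> \<bar>lab M k n u - lab M k n ((u+1) mod (2*n))\<bar> = int 3 ^ k"
proof (cases "u = 2*n - 1")
  case True
  then have "(u+1) mod (2*n) = 0" using assms by simp
  then show ?thesis using True assms by (simp add: lab_def)
next
  case False
  then have e: "(u+1) mod (2*n) = u+1" using assms by simp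
  consider "u + 1 < n" | "u + 1 = n" | "u \<ge> n" by linarith
  then show ?thesis
  proof cases
    case 1 then show ?thesis using e by (simp add: lab_def algebra_simps)
  next
    case 2
    then have "2*n - 1 - (u+1) = u" by simp
    then show ?thesis using e 2 by (simp add: lab_def algebra_simps)
  next
    case 3
    then have "2*n - 1 - u = Suc (2*n - 1 - (u+1))" using False assms by simp
    then have "int (2*n - 1 - u) = int (2*n - 1 - (u+1)) + 1" by simp
    then show ?thesis using e 3 by (simp add: lab_def algebra_simps)
  qed
qed

lemma lab_inj:
  assumes "k \<ge> 1"
  shows "inj_on (lab M k n) {0..<2*n}"
proof (rule inj_onI)
  fix u v assume u: "u \<in> {0..<2*n}" and v: "v \<in> {0..<2*n}" and eq: "lab M k n u = lab M k n v"
  have ev: "even (int j * 2^k)" for j :: nat using assms by simp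
  have od: "odd ((3::int)^k + int j * 2^k)" for j :: nat using assms by simp
  show "u = v"
  proof (cases "u < n")
    case True
    show ?thesis
    proof (cases "v < n")
      case True
      with \<open>u < n\<close> eq show ?thesis by (simp add: lab_def)
    next
      case False
      with \<open>u < n\<close> eq have "int u * 2^k = 3^k + int (2*n - 1 - v) * 2^k" by (simp add: lab_def)
      then show ?thesis using ev[of u] od[of "2*n-1-v"] by simp
    qed
  next
    case False
    show ?thesis
    proof (cases "v < n")
      case True
      with \<open>\<not> u < n\<close> eq have "int v * 2^k = 3^k + int (2*n - 1 - u) * 2^k" by (simp add: lab_def)
      then show ?thesis using ev[of v] od[of "2*n-1-u"] by simp
    next
      case False
      with \<open>\<not> u < n\<close> eq have "int (2*n - 1 - u) = int (2*n - 1 - v)" by (simp add: lab_def)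
      then show ?thesis using u v by simp
    qed
  qed
qed

lemma lab_ok:
  assumes "k \<ge> 1" "n \<ge> 2"
  shows "strict_prime_power_distance_labeling k {0..<2*n} (cycle_edge (2*n)) (lab M k n)"
  unfolding strict_prime_power_distance_labeling_def
proof (intro conjI ballI impI)
  show "inj_on (lab M k n) {0..<2*n}" using lab_inj assms by blast
next
  fix u v assume u: "u \<in> {0..<2*n}" and v: "v \<in> {0..<2*n}" and E: "cycle_edge (2*n) u v"
  have p2: "prime (2::nat)" and p3: "prime (3::nat)" by auto
  from E have "v = (u+1) mod (2*n) \<or> u = (v+1) mod (2*n)" by (simp add: cycle_edge_def)
  then have "\<bar>lab M k n u - lab M k n v\<bar> = int 2 ^ k \<or> \<bar>lab M k n u - lab M k n v\<bar> = int 3 ^ k"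
  proof
    assume "v = (u+1) mod (2*n)"
    then show ?thesis using lab_edge_step[OF assms, of u M] u by simp
  next
    assume "u = (v+1) mod (2*n)"
    then show ?thesis using lab_edge_step[OF assms, of v M] v by (simp add: abs_minus_commute)
  qed
  then show "\<exists>p::nat. prime p \<and> \<bar>lab M k n u - lab M k n v\<bar> = int p ^ k" using p2 p3 by blast
qed

theorem mainTheorem12:
  fixes k n :: nat
  assumes "k \<ge> 1" and "n \<ge> 2"
  shows "strict_prime_power_distance_graph k {0..<2*n} (cycle_edge (2*n))
       \<and> (\<forall>M::int. \<exists>L. strict_prime_power_distance_labeling k {0..<2*n} (cycle_edge (2*n)) L
                        \<and> (\<forall>v\<in>{0..<2*n}. L v > M))"
proof (intro conjI allI)
  show "strict_prime_power_distance_graph k {0..<2*n} (cycle_edge (2*n))"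
    unfolding strict_prime_power_distance_graph_def using lab_ok[OF assms] by blast
next
  fix M :: int
  have "lab M k n v > M" for v
  proof -
    have "0 \<le> int v * 2^k" "0 \<le> (3::int)^k + int (2*n - 1 - v) * 2^k" by simp_all
    then show ?thesis unfolding lab_def by (simp only: split: if_split) linarith
  qed
  then have "\<forall>v\<in>{0..<2*n}. lab M k n v > M" by blast
  then show "\<exists>L. strict_prime_power_distance_labeling k {0..<2*n} (cycle_edge (2*n)) L
                        \<and> (\<forall>v\<in>{0..<2*n}. L v > M)" using lab_ok[OF assms] by blast
qed

end
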